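(* Fix $q\ge2$ and $z\in\mathbb Z$, and set $k=\lceil\log_q n\rceil+z$ and $\Delta_n=\log_q n-\lceil\log_q n\rceil$. Then $$\lim_{n\to\infty}\frac{a_q(n,k)}{q^n\,e^{-(q-1)q^{\Delta_n-z-1}}}=1.$$
   Context: $\Sigma_q=\{0,\dots,q-1\}$. A vector in $\Sigma_q^n$ is a $k$-RLL vector if $n<k$ or it contains no run of $k$ consecutive zeros; $a_q(n,k)$ is the number of $k$-RLL vectors in $\Sigma_q^n$. *)

theory Defs
  imports Complex_Main
begin

text \<open>The run length k is an integer
  (it arises as ceiling(log_q n) + z); for k \<le> 0 the empty run is always present.\<close>

definition has_zero_run :: "nat list \<Rightarrow> nat \<Rightarrow> bool" where
  "has_zero_run xs k \<longleftrightarrow> (\<exists>i. i + k \<le> length xs \<and> (\<forall>j<k. xs ! (i + j) = 0))"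

definition is_RLL :: "nat list \<Rightarrow> int \<Rightarrow> bool" where
  "is_RLL xs k \<longleftrightarrow> int (length xs) < k \<or> \<not> has_zero_run xs (nat k)"

definition a_q :: "nat \<Rightarrow> nat \<Rightarrow> int \<Rightarrow> nat" where
  "a_q q n k = card {xs. length xs = n \<and> set xs \<subseteq> {0..<q} \<and> is_RLL xs k}"

end

theory Submission
  imports Defs
begin

lemma hzr_Cons: "has_zero_run (x#xs) k \<longleftrightarrow>
   (k \<le> Suc (length xs) \<and> (\<forall>j<k. (x#xs)!j = 0)) \<or> has_zero_run xs k"
proof
  assume "has_zero_run (x#xs) k"
  then obtain i where i: "i + k \<le> length (x#xs)" "\<forall>j<k. (x#xs)!(i+j) = 0"
    unfolding has_zero_run_def by blast
  show "(k \<le> Suc (length xs) \<and> (\<forall>j<k. (x#xs)!j = 0)) \<or> has_zero_run xs k"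
  proof (cases i)
    case 0 then show ?thesis using i by auto
  next
    case (Suc i') then show ?thesis using i unfolding has_zero_run_def
      by (intro disjI2 exI[of _ i']) auto
  qed
next
  assume "(k \<le> Suc (length xs) \<and> (\<forall>j<k. (x#xs)!j = 0)) \<or> has_zero_run xs k"
  then show "has_zero_run (x#xs) k"
  proof
    assume "k \<le> Suc (length xs) \<and> (\<forall>j<k. (x#xs)!j = 0)"
    then show ?thesis unfolding has_zero_run_def by (intro exI[of _ 0]) auto
  next
    assume "has_zero_run xs k"
    then obtain i where i: "i + k \<le> length xs" "\<forall>j<k. xs!(i+j) = 0"
      unfolding has_zero_run_def by blast
    then show ?thesis unfolding has_zero_run_def by (intro exI[of _ "Suc i"]) auto
  qed
qed

lemma runat_rep:
  assumes "c \<noteq> 0"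
  shows "(k \<le> length (replicate j 0 @ c # xs) \<and> (\<forall>i<k. (replicate j 0 @ c # xs)!i = 0))
     \<longleftrightarrow> k \<le> j"
proof
  assume h: "k \<le> length (replicate j 0 @ c # xs) \<and> (\<forall>i<k. (replicate j 0 @ c # xs)!i = 0)"
  show "k \<le> j"
  proof (rule ccontr)
    assume "\<not> k \<le> j"
    then have "(replicate j 0 @ c # xs)!j = 0" using h by auto
    then show False using assms by (simp add: nth_append)
  qed
next
  assume "k \<le> j"
  then show "k \<le> length (replicate j 0 @ c # xs) \<and> (\<forall>i<k. (replicate j 0 @ c # xs)!i = 0)"
    by (auto simp: nth_append)
qed

lemma hzr_rep:
  assumes "c \<noteq> 0" "k \<ge> 1"
  shows "has_zero_run (replicate j 0 @ c # xs) k \<longleftrightarrow> k \<le> j \<or> has_zero_run xs k"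
proof (induction j)
  case 0
  have "\<not> (\<forall>j<k. (c#xs)!j = 0)" using assms by (metis less_one nth_Cons_0 order_less_le_trans zero_less_one)
  then show ?case using hzr_Cons[of c xs k] by auto
next
  case (Suc j)
  have e: "replicate (Suc j) 0 @ c # xs = 0 # (replicate j 0 @ c # xs)" by simp
  show ?case unfolding e hzr_Cons[of 0 "replicate j 0 @ c # xs" k] Suc
    using runat_rep[OF assms(1), of k "Suc j" xs] by auto
qed

lemma hzr_short: "length xs < k \<Longrightarrow> \<not> has_zero_run xs k"
  unfolding has_zero_run_def by auto

lemma hzr_allzero: "k \<le> n \<Longrightarrow> has_zero_run (replicate n 0) k"
  unfolding has_zero_run_def by (intro exI[of _ 0]) auto

lemma decomp: "(\<exists>m. xs = replicate m 0) \<or> (\<exists>j c ys. c \<noteq> 0 \<and> xs = replicate j 0 @ c # ys)"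
proof (induction xs)
  case Nil then show ?case by (auto intro: exI[of _ 0])
next
  case (Cons x xs)
  show ?case
  proof (cases "x = 0")
    case False then show ?thesis by (metis append.simps(1) replicate_0)
  next
    case True
    from Cons.IH show ?thesis
    proof
      assume "\<exists>m. xs = replicate m 0"
      then obtain m where "xs = replicate m 0" by blast
      then show ?thesis using True by (intro disjI1 exI[of _ "Suc m"]) auto
    next
      assume "\<exists>j c ys. c \<noteq> 0 \<and> xs = replicate j 0 @ c # ys"
      then obtain j c ys where "c \<noteq> 0" "xs = replicate j 0 @ c # ys" by blast
      then show ?thesis using True by (intro disjI2 exI[of _ "Suc j"] exI[of _ c] exI[of _ ys]) auto
    qed
  qed
qed

lemma rep_inj: "c \<noteq> 0 \<Longrightarrow> c' \<noteq> 0 \<Longrightarrow> replicate j 0 @ c # ys = replicate j' 0 @ c' # ys' \<Longrightarrow> j = j'"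
proof (induction j arbitrary: j')
  case 0 then show ?case by (cases j') auto
next
  case (Suc j) then show ?case by (cases j') auto
qed

definition S :: "nat \<Rightarrow> nat \<Rightarrow> nat \<Rightarrow> nat list set" where
  "S q k n = {xs. length xs = n \<and> set xs \<subseteq> {0..<q} \<and> \<not> has_zero_run xs k}"

lemma S_finite: "finite (S q k n)"
proof -
  have "S q k n \<subseteq> {xs. set xs \<subseteq> {0..<q} \<and> length xs = n}" unfolding S_def by auto
  then show ?thesis using finite_lists_length_eq[of "{0..<q}" n] finite_subset by blast
qed

lemma S_short: "n < k \<Longrightarrow> card (S q k n) = q ^ n"
proof -
  assume "n < k"
  then have "S q k n = {xs. set xs \<subseteq> {0..<q} \<and> length xs = n}"
    unfolding S_def using hzr_short by auto
  then show ?thesis using card_lists_length_eq[of "{0..<q}" n] by simp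
qed

lemma S_decomp:
  assumes "1 \<le> k" "k \<le> n"
  shows "S q k n = (\<Union>j<k. (\<lambda>(c,ys). replicate j 0 @ c # ys) ` ({1..<q} \<times> S q k (n - 1 - j)))"
proof
  show "S q k n \<subseteq> (\<Union>j<k. (\<lambda>(c,ys). replicate j 0 @ c # ys) ` ({1..<q} \<times> S q k (n - 1 - j)))"
  proof
    fix xs assume xs: "xs \<in> S q k n"
    have "\<not> (\<exists>m. xs = replicate m 0)"
      using xs hzr_allzero assms unfolding S_def by auto
    then obtain j c ys where jc: "c \<noteq> 0" "xs = replicate j 0 @ c # ys" using decomp by blast
    have "\<not> (k \<le> j \<or> has_zero_run ys k)" using xs jc hzr_rep[OF jc(1) assms(1)] unfolding S_def by auto
    moreover have "c < q" "set ys \<subseteq> {0..<q}" "length ys = n - 1 - j" using xs jc unfolding S_def by auto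
    ultimately show "xs \<in> (\<Union>j<k. (\<lambda>(c,ys). replicate j 0 @ c # ys) ` ({1..<q} \<times> S q k (n - 1 - j)))"
      using jc unfolding S_def by (auto intro!: bexI[of _ j] image_eqI[of _ _ "(c,ys)"])
  qed
next
  show "(\<Union>j<k. (\<lambda>(c,ys). replicate j 0 @ c # ys) ` ({1..<q} \<times> S q k (n - 1 - j))) \<subseteq> S q k n"
  proof
    fix xs assume "xs \<in> (\<Union>j<k. (\<lambda>(c,ys). replicate j 0 @ c # ys) ` ({1..<q} \<times> S q k (n - 1 - j)))"
    then obtain j c ys where h: "j < k" "c \<in> {1..<q}" "ys \<in> S q k (n - 1 - j)" "xs = replicate j 0 @ c # ys"
      by auto
    have "c \<noteq> 0" using h by auto
    then show "xs \<in> S q k n" using h hzr_rep[of c k j ys] assms unfolding S_def by auto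
  qed
qed

lemma S_rec:
  assumes "1 \<le> k" "k \<le> n"
  shows "card (S q k n) = (q - 1) * (\<Sum>j<k. card (S q k (n - 1 - j)))"
proof -
  have "card (S q k n) = (\<Sum>j<k. card ((\<lambda>(c,ys). replicate j 0 @ c # ys) ` ({1..<q} \<times> S q k (n - 1 - j))))"
    unfolding S_decomp[OF assms]
  proof (rule card_UN_disjoint)
    show "finite {..<k}" by simp
    show "\<forall>i\<in>{..<k}. finite ((\<lambda>(c,ys). replicate i 0 @ c # ys) ` ({1..<q} \<times> S q k (n - 1 - i)))"
      using S_finite by auto
    show "\<forall>i\<in>{..<k}. \<forall>j\<in>{..<k}. i \<noteq> j \<longrightarrow>
      (\<lambda>(c,ys). replicate i 0 @ c # ys) ` ({1..<q} \<times> S q k (n - 1 - i)) \<inter>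
      (\<lambda>(c,ys). replicate j 0 @ c # ys) ` ({1..<q} \<times> S q k (n - 1 - j)) = {}"
    proof (intro ballI impI)
      fix i j :: nat assume ij: "i \<noteq> j"
      show "(\<lambda>(c,ys). replicate i 0 @ c # ys) ` ({1..<q} \<times> S q k (n - 1 - i)) \<inter>
        (\<lambda>(c,ys). replicate j 0 @ c # ys) ` ({1..<q} \<times> S q k (n - 1 - j)) = {}"
      proof (rule equals0I)
        fix x assume x: "x \<in> (\<lambda>(c,ys). replicate i 0 @ c # ys) ` ({1..<q} \<times> S q k (n - 1 - i)) \<inter>
          (\<lambda>(c,ys). replicate j 0 @ c # ys) ` ({1..<q} \<times> S q k (n - 1 - j))"
        have ex: "\<exists>c ys. c \<in> {1..<q} \<and> x = replicate l 0 @ c # ys"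
          if "x \<in> (\<lambda>(c,ys). replicate l 0 @ c # ys) ` ({1..<q} \<times> S q k (n - 1 - l))" for l
        proof -
          from that obtain p where p: "p \<in> {1..<q} \<times> S q k (n - 1 - l)" "x = (\<lambda>(c,ys). replicate l 0 @ c # ys) p"
            by (rule imageE)
          obtain c ys where "p = (c, ys)" by (cases p)
          then have "c \<in> {1..<q}" "x = replicate l 0 @ c # ys" using p by auto
          then show ?thesis by blast
        qed
        obtain c ys where h1: "c \<in> {1..<q}" "x = replicate i 0 @ c # ys" using ex[of i] x by blast
        obtain c' ys' where h2: "c' \<in> {1..<q}" "x = replicate j 0 @ c' # ys'" using ex[of j] x by blast
        note h = h1 h2
        then have "i = j" using rep_inj[of c c' i ys j ys'] by auto
        then show False using ij by simp
      qed
    qed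
  qed
  also have "\<dots> = (\<Sum>j<k. (q - 1) * card (S q k (n - 1 - j)))"
  proof (rule sum.cong[OF refl])
    fix j
    have "inj_on (\<lambda>(c,ys). replicate j 0 @ c # ys) ({1..<q} \<times> S q k (n - 1 - j))"
      by (rule inj_onI) auto
    then show "card ((\<lambda>(c,ys). replicate j 0 @ c # ys) ` ({1..<q} \<times> S q k (n - 1 - j))) =
      (q - 1) * card (S q k (n - 1 - j))"
      by (simp add: card_image card_cartesian_product)
  qed
  finally show ?thesis by (simp add: sum_distrib_left)
qed

lemma is_RLL_iff:
  assumes "K \<ge> 1" shows "is_RLL xs K \<longleftrightarrow> \<not> has_zero_run xs (nat K)"
proof -
  have "int (length xs) < K \<Longrightarrow> length xs < nat K" by linarith
  then show ?thesis unfolding is_RLL_def using hzr_short[of xs "nat K"] by blast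
qed

lemma a_q_S: "K \<ge> 1 \<Longrightarrow> a_q q n K = card (S q (nat K) n)"
  unfolding a_q_def S_def using is_RLL_iff by simp

lemma iter_ratio:
  fixes g :: "nat \<Rightarrow> real"
  assumes "\<forall>i. a \<le> i \<and> i < a + d \<longrightarrow> g (Suc i) \<ge> r * g i" "r \<ge> 0"
  shows "g (a + d) \<ge> r ^ d * g a"
  using assms(1)
proof (induction d)
  case 0 then show ?case by simp
next
  case (Suc d)
  have "g (a + d) \<ge> r ^ d * g a" using Suc by auto
  moreover have "g (Suc (a + d)) \<ge> r * g (a + d)" using Suc.prems by auto
  ultimately show ?case using assms(2)
    by (simp add: mult.assoc) (smt (verit) mult_left_mono)
qed

locale seq =
  fixes f :: "nat \<Rightarrow> real" and Q :: real and k :: nat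
  assumes Q: "Q \<ge> 2" and k: "k \<ge> 1"
    and h0: "\<And>n. n < k \<Longrightarrow> f n = 1"
    and hk: "f k = 1 - 1 / Q ^ k"
    and hrec: "\<And>n. n \<ge> k + 1 \<Longrightarrow> f n = f (n - 1) - (Q - 1) / Q ^ (k + 1) * f (n - k - 1)"
    and hnn: "\<And>n. f n \<ge> 0"
begin

definition "eps = (Q - 1) / Q ^ (k + 1)"

lemma eps_pos: "eps \<ge> 0" unfolding eps_def using Q by auto

lemma Qk: "Q ^ k \<ge> 2"
proof -
  have "Q ^ k \<ge> Q ^ 1" using Q k by (intro power_increasing) auto
  then show ?thesis using Q by simp
qed

lemma eps_le: "eps \<le> 1 / Q ^ k"
proof -
  have "eps \<le> Q / Q^(k+1)" unfolding eps_def using Q by (intro divide_right_mono) auto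
  also have "\<dots> = 1/Q^k" using Q by simp
  finally show ?thesis .
qed

lemma eps_le1: "eps \<le> 1/2" using eps_le Qk by (smt (verit) frac_le zero_le_divide_1_iff)

lemma dec: "f (Suc n) \<le> f n"
proof (cases "Suc n < k")
  case True then show ?thesis using h0 by simp
next
  case False
  show ?thesis
  proof (cases "Suc n = k")
    case True then show ?thesis using hk h0[of n] Q by simp
  next
    case False
    then have "Suc n \<ge> k + 1" using \<open>\<not> Suc n < k\<close> by simp
    moreover have "0 \<le> (Q - 1) / Q ^ (k + 1) * f (Suc n - k - 1)"
      using eps_pos[unfolded eps_def] hnn[of "Suc n - k - 1"] by (rule mult_nonneg_nonneg)
    ultimately show ?thesis using hrec[of "Suc n"] by simp
  qed
qed

lemma decm: "m \<le> n \<Longrightarrow> f n \<le> f m"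
  using dec by (metis decseq_SucI decseqD)

lemma upper: "f n \<le> (1 - eps) ^ (n - k)"
proof (induction n)
  case 0 then show ?case using h0 k by simp
next
  case (Suc n)
  show ?case
  proof (cases "Suc n \<le> k")
    case True
    have "f (Suc n) \<le> f 0" by (rule decm) simp
    then show ?thesis using True h0 k by simp
  next
    case False
    then have "f (Suc n) = f n - eps * f (n - k)" using hrec[of "Suc n"] unfolding eps_def by simp
    also have "\<dots> \<le> f n - eps * f n" using decm[of "n - k" n] eps_pos by (simp add: mult_left_mono)
    also have "\<dots> = (1 - eps) * f n" by (simp add: algebra_simps)
    also have "\<dots> \<le> (1 - eps) * (1 - eps) ^ (n - k)" using Suc eps_le1 by (intro mult_left_mono) auto
    also have "\<dots> = (1 - eps) ^ (Suc n - k)" using False by (simp add: Suc_diff_le)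
    finally show ?thesis .
  qed
qed

definition "t = real k * eps + 1 / Q ^ k"
definition "beta = 1 + 4 * t"
definition "rho = 1 - eps * beta"

lemma lower:
  assumes t: "t \<le> 1/4"
  shows "f n \<ge> (1 - 1 / Q ^ k) * rho ^ n"
proof -
  define c where "c = 1 - 1 / Q ^ k"
  have c: "c > 0" "c \<le> 1" unfolding c_def using Qk by auto
  have "eps \<le> real k * eps" using k eps_pos by (simp add: mult_le_cancel_right1)
  moreover have "1/Q^k \<ge> 0" using Q by simp
  ultimately have t0: "t \<ge> 0" "real k * eps \<le> t" "1/Q^k \<le> t" "eps \<le> t" unfolding t_def using eps_pos
    by (linarith, linarith, linarith, linarith)
  have b: "1 \<le> beta" "beta \<le> 2" unfolding beta_def using t0 t by auto
  have eb0: "0 \<le> eps * beta" using eps_pos b by simp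
  have "eps * beta \<le> (1/4) * 2" using t0 t b eps_pos by (intro mult_mono) auto
  then have eb: "eps * beta \<le> 1/2" by simp
  have r: "rho \<ge> 1/2" "rho \<le> 1" unfolding rho_def using eb eb0 by auto
  have ke0: "0 \<le> real k * eps" using eps_pos by simp
  have keb2: "real k * eps * beta \<le> real k * eps * 2" using ke0 b by (intro mult_left_mono) auto
  have bern: "rho ^ k \<ge> 1 - real k * eps * beta"
    using Bernoulli_inequality[of "- (eps * beta)" k] eb unfolding rho_def by (simp add: mult.assoc)
  have key: "beta * c * rho ^ k \<ge> 1"
  proof -
    have bc: "beta * c \<ge> 0" using b c by simp
    have s1: "beta * c * rho ^ k \<ge> beta * c * (1 - real k * eps * beta)"
      using bern bc by (rule mult_left_mono)
    have "c * (1 - real k * eps * beta) = 1 - 1/Q^k - real k * eps * beta + (1/Q^k) * (real k * eps * beta)"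
      unfolding c_def by (simp add: algebra_simps)
    moreover have "(1/Q^k) * (real k * eps * beta) \<ge> 0" using Q ke0 b by simp
    ultimately have "c * (1 - real k * eps * beta) \<ge> 1 - 2 * t" using t0 keb2 t_def \<open>1/Q^k \<ge> 0\<close> by linarith
    then have s2: "beta * c * (1 - real k * eps * beta) \<ge> beta * (1 - 2 * t)"
      using b by (simp add: mult.assoc mult_left_mono)
    have "beta * (1 - 2 * t) = 1 + 2 * t * (1 - 4 * t)" unfolding beta_def by (simp add: algebra_simps)
    moreover have "2 * t * (1 - 4 * t) \<ge> 0" using t0 t by simp
    ultimately show ?thesis using s1 s2 by linarith
  qed
  define g where "g m = (if m < k then f m else f m / c)" for m
  have gf: "f m \<le> g m" for m
  proof (cases "m < k")
    case True then show ?thesis unfolding g_def by simp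
  next
    case False
    have "f m * 1 \<le> f m * (1 / c)" using c hnn[of m] by (intro mult_left_mono) auto
    then show ?thesis using False unfolding g_def by simp
  qed
  have step: "g (Suc m) \<ge> rho * g m" for m
  proof (induction m rule: less_induct)
    case (less m)
    show ?case
    proof (cases "Suc m < k")
      case True then show ?thesis using h0 r unfolding g_def by simp
    next
      case False
      show ?thesis
      proof (cases "Suc m = k")
        case True then show ?thesis using h0[of m] r c hk Qk unfolding g_def c_def by simp
      next
        case False
        then have mk: "m \<ge> k" using \<open>\<not> Suc m < k\<close> by simp
        have it: "g (m - k + k) \<ge> rho ^ k * g (m - k)"
          by (rule iter_ratio) (use less r mk in auto)
        then have gm: "g m \<ge> rho ^ k * g (m - k)" using mk by simp
        have gmm: "g m = f m / c" using mk unfolding g_def by simp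
        have rk: "rho ^ k \<ge> 0" using r by simp
        have "f (m - k) \<le> beta * c * rho ^ k * f (m - k)"
          using key hnn[of "m - k"] by (metis mult_left_mono mult_1 mult.commute)
        also have "\<dots> = beta * c * (rho ^ k * f (m - k))" by simp
        also have "\<dots> \<le> beta * c * (rho ^ k * g (m - k))"
          using gf[of "m - k"] rk b c by (intro mult_left_mono) auto
        also have "\<dots> \<le> beta * c * g m"
          using gm b c by (intro mult_left_mono) auto
        also have "\<dots> = beta * f m" using gmm c by simp
        finally have fb: "f (m - k) \<le> beta * f m" .
        have "f (Suc m) = f m - eps * f (m - k)" using hrec[of "Suc m"] mk unfolding eps_def by simp
        also have "\<dots> \<ge> f m - eps * (beta * f m)" using fb eps_pos by (simp add: mult_left_mono)
        finally have "f (Suc m) \<ge> rho * f m" unfolding rho_def by (simp add: algebra_simps)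
        then show ?thesis using mk c unfolding g_def by (simp add: divide_right_mono)
      qed
    qed
  qed
  have "g (0 + n) \<ge> rho ^ n * g 0" by (rule iter_ratio) (use step r in auto)
  then have gn: "g n \<ge> rho ^ n" using h0[of 0] k unfolding g_def by (simp split: if_splits)
  have "f n \<ge> c * g n"
  proof (cases "n < k")
    case True
    have "c * g n \<le> 1 * g n" using c True h0[of n] unfolding g_def by simp
    then show ?thesis using True unfolding g_def by simp
  next
    case False then show ?thesis using c unfolding g_def by simp
  qed
  moreover have "c * g n \<ge> c * rho ^ n" using gn c by simp
  ultimately show ?thesis unfolding c_def by linarith
qed

end

definition epsk :: "real \<Rightarrow> nat \<Rightarrow> real" where "epsk Q k = (Q - 1) / Q ^ (k + 1)"
definition tk :: "real \<Rightarrow> nat \<Rightarrow> real" where "tk Q k = real k * epsk Q k + 1 / Q ^ k"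
definition betak :: "real \<Rightarrow> nat \<Rightarrow> real" where "betak Q k = 1 + 4 * tk Q k"
definition sk :: "real \<Rightarrow> nat \<Rightarrow> real" where "sk Q k = betak Q k / (1 - epsk Q k * betak Q k) - 1"
definition lo :: "real \<Rightarrow> real \<Rightarrow> nat \<Rightarrow> real" where "lo Q C k = (1 - 1 / Q ^ k) * exp (- C * sk Q k)"
definition hi :: "real \<Rightarrow> nat \<Rightarrow> real" where "hi Q k = exp (real k * epsk Q k)"

context seq begin
lemma upper': "f n \<le> (1 - epsk Q k) ^ (n - k)"
  using upper unfolding eps_def epsk_def .
lemma lower': "tk Q k \<le> 1/4 \<Longrightarrow> f n \<ge> (1 - 1 / Q ^ k) * (1 - epsk Q k * betak Q k) ^ n"
  using lower unfolding eps_def epsk_def t_def tk_def beta_def betak_def rho_def by simp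
end

lemma epsk_le: "Q \<ge> 2 \<Longrightarrow> 0 \<le> epsk Q k \<and> epsk Q k \<le> 1 / Q ^ k"
proof -
  assume Q: "Q \<ge> 2"
  have "epsk Q k \<le> Q / Q^(k+1)" unfolding epsk_def using Q by (intro divide_right_mono) auto
  also have "\<dots> = 1/Q^k" using Q by simp
  finally show ?thesis unfolding epsk_def using Q by simp
qed

lemma lims:
  assumes Q: "Q \<ge> 2"
  shows "(\<lambda>k. tk Q k) \<longlonglongrightarrow> 0" "(\<lambda>k. lo Q C k) \<longlonglongrightarrow> 1" "(\<lambda>k. hi Q k) \<longlonglongrightarrow> 1"
proof -
  have p: "(\<lambda>k. 1 / Q ^ k) \<longlonglongrightarrow> 0"
  proof -
    have "(\<lambda>k. (1 / Q) ^ k) \<longlonglongrightarrow> 0" using Q by (intro LIMSEQ_realpow_zero) auto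
    then show ?thesis by (simp add: power_one_over)
  qed
  have e: "(\<lambda>k. epsk Q k) \<longlonglongrightarrow> 0"
    by (rule tendsto_sandwich[OF _ _ tendsto_const p]) (use epsk_le[OF Q] in auto)
  have n: "(\<lambda>k. real k / Q ^ k) \<longlonglongrightarrow> 0" using lim_n_over_pown[of Q] Q by simp
  have ke: "(\<lambda>k. real k * epsk Q k) \<longlonglongrightarrow> 0"
  proof (rule tendsto_sandwich[OF _ _ tendsto_const n])
    show "\<forall>\<^sub>F k in sequentially. 0 \<le> real k * epsk Q k" using epsk_le[OF Q] by simp
    show "\<forall>\<^sub>F k in sequentially. real k * epsk Q k \<le> real k / Q ^ k"
    proof (rule always_eventually, rule allI)
      fix k
      have "real k * epsk Q k \<le> real k * (1 / Q ^ k)" using epsk_le[OF Q, of k] by (intro mult_left_mono) auto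
      then show "real k * epsk Q k \<le> real k / Q ^ k" by simp
    qed
  qed
  show t: "(\<lambda>k. tk Q k) \<longlonglongrightarrow> 0" unfolding tk_def using tendsto_add[OF ke p] by simp
  have b: "(\<lambda>k. betak Q k) \<longlonglongrightarrow> 1" unfolding betak_def using tendsto_add[OF tendsto_const tendsto_mult[OF tendsto_const t]] by simp
  have s0: "(\<lambda>k. betak Q k / (1 - epsk Q k * betak Q k)) \<longlonglongrightarrow> 1"
    using tendsto_divide[OF b tendsto_diff[OF tendsto_const tendsto_mult[OF e b]], of 1] by simp
  have s: "(\<lambda>k. sk Q k) \<longlonglongrightarrow> 0" unfolding sk_def
    using tendsto_diff[OF s0 tendsto_const[of 1]] by simp
  show "(\<lambda>k. lo Q C k) \<longlonglongrightarrow> 1" unfolding lo_def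
    using tendsto_mult[OF tendsto_diff[OF tendsto_const p] tendsto_exp[OF tendsto_mult[OF tendsto_const s]], of 1 "-C"]
    by simp
  show "(\<lambda>k. hi Q k) \<longlonglongrightarrow> 1" unfolding hi_def using tendsto_exp[OF ke] by simp
qed

lemma S_k:
  assumes "1 \<le> k" "2 \<le> q"
  shows "real (card (S q k k)) = real q ^ k - 1"
proof -
  have "card (S q k k) = (q - 1) * (\<Sum>j<k. card (S q k (k - 1 - j)))" using S_rec[of k k q] assms by simp
  also have "(\<Sum>j<k. card (S q k (k - 1 - j))) = (\<Sum>j<k. q ^ (k - Suc j))"
    by (rule sum.cong[OF refl]) (use assms S_short in auto)
  also have "\<dots> = (\<Sum>j<k. q ^ j)" by (rule sum.nat_diff_reindex)
  finally have "real (card (S q k k)) = (real q - 1) * (\<Sum>j<k. real q ^ j)"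
    using assms by (simp add: of_nat_diff)
  also have "\<dots> = real q ^ k - 1" using power_diff_1_eq[of "real q" k] by simp
  finally show ?thesis .
qed

lemma S_rec2:
  assumes "1 \<le> k" "k + 1 \<le> n" "1 \<le> q"
  shows "real (card (S q k n)) = real q * real (card (S q k (n - 1))) - (real q - 1) * real (card (S q k (n - k - 1)))"
proof -
  define c where "c m = real (card (S q k m))" for m
  obtain p where kp: "k = Suc p" using assms by (cases k) auto
  have A: "c n = (real q - 1) * (\<Sum>j<k. c (n - 1 - j))"
    using S_rec[of k n q] assms unfolding c_def by (simp add: of_nat_diff)
  have B: "c (n - 1) = (real q - 1) * (\<Sum>j<k. c (n - 1 - 1 - j))"
    using S_rec[of k "n - 1" q] assms unfolding c_def by (simp add: of_nat_diff)
  have A': "(\<Sum>j<k. c (n - 1 - j)) = c (n - 1) + (\<Sum>j<p. c (n - 1 - 1 - j))"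
    unfolding kp sum.lessThan_Suc_shift by simp
  have B': "(\<Sum>j<k. c (n - 1 - 1 - j)) = (\<Sum>j<p. c (n - 1 - 1 - j)) + c (n - k - 1)"
    unfolding kp sum.lessThan_Suc by (simp add: kp)
  define X where "X = (\<Sum>j<p. c (n - 1 - 1 - j))"
  have 1: "c n = (real q - 1) * c (n - 1) + (real q - 1) * X" using A A' unfolding X_def by (simp add: distrib_left)
  have 2: "c (n - 1) = (real q - 1) * X + (real q - 1) * c (n - k - 1)" using B B' unfolding X_def by (simp add: distrib_left)
  have 3: "real q * c (n - 1) = (real q - 1) * c (n - 1) + c (n - 1)" by (simp add: algebra_simps)
  have "c n = real q * c (n - 1) - (real q - 1) * c (n - k - 1)" using 1 2 3 by linarith
  then show ?thesis unfolding c_def .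
qed

lemma seq_inst:
  assumes "2 \<le> q" "1 \<le> k"
  shows "seq (\<lambda>m. real (card (S q k m)) / real q ^ m) (real q) k"
proof
  show "2 \<le> real q" using assms by simp
  show "1 \<le> k" by fact
  show "real (card (S q k n)) / real q ^ n = 1" if "n < k" for n
    using S_short[OF that, of q] assms by simp
  show "real (card (S q k k)) / real q ^ k = 1 - 1 / real q ^ k"
    using S_k[OF assms(2,1)] assms by (simp add: field_simps)
  show "0 \<le> real (card (S q k n)) / real q ^ n" for n by simp
  show "real (card (S q k n)) / real q ^ n =
    real (card (S q k (n - 1))) / real q ^ (n - 1) -
    (real q - 1) / real q ^ (k + 1) * (real (card (S q k (n - k - 1))) / real q ^ (n - k - 1))"
    if kn: "k + 1 \<le> n" for n
  proof -
    have Qp: "real q > 0" using assms by simp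
    obtain m where nm: "n = Suc m" using kn by (cases n) auto
    have e1: "real q ^ n = real q * real q ^ (n - 1)" unfolding nm by simp
    have ee: "(k + 1) + (n - k - 1) = n" using that by simp
    have e2: "real q ^ n = real q ^ (k + 1) * real q ^ (n - k - 1)"
      using power_add[of "real q" "k + 1" "n - k - 1"] unfolding ee by simp
    have "real (card (S q k n)) / real q ^ n = real q * real (card (S q k (n - 1))) / real q ^ n
        - (real q - 1) * real (card (S q k (n - k - 1))) / real q ^ n"
      using S_rec2[OF assms(2) that, of q] assms by (simp add: diff_divide_distrib)
    also have "real q * real (card (S q k (n - 1))) / real q ^ n = real (card (S q k (n - 1))) / real q ^ (n - 1)"
      unfolding e1 using Qp by simp
    also have "(real q - 1) * real (card (S q k (n - k - 1))) / real q ^ n =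
       (real q - 1) / real q ^ (k + 1) * (real (card (S q k (n - k - 1))) / real q ^ (n - k - 1))"
      unfolding e2 by simp
    finally show ?thesis .
  qed
qed

lemma exp_bound: "0 \<le> x \<Longrightarrow> x < 1 \<Longrightarrow> exp (- (x / (1 - x))) \<le> 1 - (x::real)"
proof -
  assume x: "0 \<le> x" "x < 1"
  have "1 + x / (1 - x) \<le> exp (x / (1 - x))" by (rule exp_ge_add_one_self)
  moreover have "1 + x / (1 - x) = 1 / (1 - x)" using x by (simp add: field_simps)
  ultimately have "1 / (1 - x) \<le> exp (x / (1 - x))" by simp
  then have "1 / exp (x / (1 - x)) \<le> 1 - x" using x
    by (simp add: divide_le_eq field_simps)
  then show ?thesis by (simp add: exp_minus inverse_eq_divide)
qed

lemma point:
  fixes q :: nat and z :: int and n :: nat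
  assumes q: "2 \<le> q" and n: "1 \<le> n" and K: "1 \<le> \<lceil>log (real q) (real n)\<rceil> + z"
    and t: "tk (real q) (nat (\<lceil>log (real q) (real n)\<rceil> + z)) \<le> 1/4"
  shows "lo (real q) ((real q - 1) * real q powr (- real_of_int z - 1)) (nat (\<lceil>log (real q) (real n)\<rceil> + z))
      \<le> real (a_q q n (\<lceil>log (real q) (real n)\<rceil> + z)) /
           (real q ^ n * exp (- (real q - 1) *
              real q powr ((log (real q) (real n) - real_of_int \<lceil>log (real q) (real n)\<rceil>)
                           - real_of_int z - 1)))"
    and "real (a_q q n (\<lceil>log (real q) (real n)\<rceil> + z)) /
           (real q ^ n * exp (- (real q - 1) *
              real q powr ((log (real q) (real n) - real_of_int \<lceil>log (real q) (real n)\<rceil>)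
                           - real_of_int z - 1)))
      \<le> hi (real q) (nat (\<lceil>log (real q) (real n)\<rceil> + z))"
proof -
  define Q where "Q = real q"
  define k where "k = nat (\<lceil>log Q (real n)\<rceil> + z)"
  define C where "C = (Q - 1) * Q powr (- real_of_int z - 1)"
  define X where "X = Q powr ((log Q (real n) - real_of_int \<lceil>log Q (real n)\<rceil>) - real_of_int z - 1)"
  define L where "L = (Q - 1) * X"
  define f where "f m = real (card (S q k m)) / Q ^ m" for m
  define e where "e = epsk Q k"
  have Q2: "Q \<ge> 2" unfolding Q_def using q by simp
  have k1: "1 \<le> k" unfolding k_def Q_def using K by simp
  have rk: "real k = real_of_int \<lceil>log Q (real n)\<rceil> + real_of_int z" unfolding k_def Q_def using K by simp
  interpret seq f Q k unfolding f_def Q_def using seq_inst[OF q k1] .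
  have a: "a_q q n (\<lceil>log (real q) (real n)\<rceil> + z) = card (S q k n)"
    unfolding k_def Q_def by (rule a_q_S[OF K])
  have np: "real n > 0" using n by simp
  have hX: "X = real n / Q ^ (k + 1)"
  proof -
    have "X = Q powr (log Q (real n) - real (k + 1))" unfolding X_def using rk by (simp add: algebra_simps)
    also have "\<dots> = Q powr log Q (real n) / Q powr real (k + 1)" by (rule powr_diff)
    also have "\<dots> = real n / Q ^ (k + 1)"
    proof -
      have "Q powr real (k + 1) = Q ^ (k + 1)" using Q2 by (intro powr_realpow) simp
      moreover have "Q powr log Q (real n) = real n" using Q2 np by simp
      ultimately show ?thesis by simp
    qed
    finally show ?thesis .
  qed
  have hL: "L = real n * e" unfolding L_def e_def epsk_def hX by simp
  have e0: "0 \<le> e" "e \<le> 1 / Q ^ k" using epsk_le[OF Q2, of k] unfolding e_def by auto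
  have Qk: "Q ^ k \<ge> 2" using Qk .
  have L0: "0 \<le> L" using hL e0 by simp
  have LC: "L \<le> C"
  proof -
    have "X \<le> Q powr (- real_of_int z - 1)" unfolding X_def using Q2
      by (intro powr_mono) (auto simp: ceiling_correct)
    then show ?thesis unfolding L_def C_def using Q2 by (intro mult_left_mono) auto
  qed
  have R: "real (a_q q n (\<lceil>log (real q) (real n)\<rceil> + z)) /
           (real q ^ n * exp (- (real q - 1) *
              real q powr ((log (real q) (real n) - real_of_int \<lceil>log (real q) (real n)\<rceil>)
                           - real_of_int z - 1))) = f n * exp L"
  proof -
    have R0: "\<And>A. A / (Q ^ n * exp (- L)) = A / Q ^ n * exp L" by (simp add: exp_minus field_simps)
    have eqL: "- (real q - 1) * real q powr ((log (real q) (real n) - real_of_int \<lceil>log (real q) (real n)\<rceil>)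
                           - real_of_int z - 1) = - L" unfolding L_def X_def Q_def by (simp only: minus_mult_left)
    show ?thesis unfolding eqL a unfolding f_def Q_def[symmetric] by (rule R0)
  qed
  have hiv: "hi (real q) (nat (\<lceil>log (real q) (real n)\<rceil> + z)) = exp (real k * e)"
    unfolding hi_def e_def k_def Q_def ..
  have lov: "lo (real q) ((real q - 1) * real q powr (- real_of_int z - 1)) (nat (\<lceil>log (real q) (real n)\<rceil> + z))
    = (1 - 1 / Q ^ k) * exp (- C * sk Q k)"
    unfolding lo_def C_def k_def Q_def ..
  have fnn: "0 \<le> f n" using Q2 unfolding f_def by simp
  show "real (a_q q n (\<lceil>log (real q) (real n)\<rceil> + z)) /
           (real q ^ n * exp (- (real q - 1) *
              real q powr ((log (real q) (real n) - real_of_int \<lceil>log (real q) (real n)\<rceil>)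
                           - real_of_int z - 1)))
      \<le> hi (real q) (nat (\<lceil>log (real q) (real n)\<rceil> + z))"
    unfolding R hiv
  proof -
    have e1: "e \<le> 1/2" using e0 Qk by (smt (verit) frac_le zero_le_divide_1_iff)
    have "f n \<le> (1 - e) ^ (n - k)" using upper' unfolding e_def .
    also have "\<dots> \<le> exp (- e) ^ (n - k)"
      using e1 exp_ge_add_one_self[of "-e"] by (intro power_mono) auto
    also have "\<dots> = exp (real (n - k) * (- e))" by (rule exp_of_nat_mult[symmetric])
    finally have fu: "f n \<le> exp (real (n - k) * (- e))" .
    have "f n * exp L \<le> exp (real (n - k) * (- e)) * exp L" using fu by (intro mult_right_mono) auto
    also have "\<dots> = exp (real (n - k) * (- e) + real n * e)" unfolding hL exp_add[symmetric] ..
    also have "\<dots> \<le> exp (real k * e)"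
    proof -
      have "real n - real k \<le> real (n - k)" by linarith
      then have "(real n - real k) * e \<le> real (n - k) * e" using e0 by (intro mult_right_mono) auto
      then show ?thesis by (simp add: algebra_simps)
    qed
    finally show "f n * exp L \<le> exp (real k * e)" .
  qed
  show "lo (real q) ((real q - 1) * real q powr (- real_of_int z - 1)) (nat (\<lceil>log (real q) (real n)\<rceil> + z))
      \<le> real (a_q q n (\<lceil>log (real q) (real n)\<rceil> + z)) /
           (real q ^ n * exp (- (real q - 1) *
              real q powr ((log (real q) (real n) - real_of_int \<lceil>log (real q) (real n)\<rceil>)
                           - real_of_int z - 1)))"
    unfolding R lov
  proof -
    define b where "b = betak Q k"
    define x where "x = e * b"
    define c where "c = 1 - 1 / Q ^ k"
    have tt: "tk Q k \<le> 1/4" using t unfolding k_def Q_def .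
    have ke: "e \<le> real k * e" using k1 e0 by (simp add: mult_le_cancel_right1)
    have q0: "0 \<le> 1 / Q ^ k" using Q2 by simp
    have t0: "0 \<le> tk Q k" "e \<le> tk Q k" unfolding tk_def e_def[symmetric] using ke e0 q0 by linarith+
    have b12: "1 \<le> b" "b \<le> 2" unfolding b_def betak_def using t0 tt by auto
    have x0: "0 \<le> x" unfolding x_def using e0 b12 by simp
    have "x \<le> (1/4) * 2" unfolding x_def using e0 b12 t0 tt by (intro mult_mono) auto
    then have x1: "x \<le> 1/2" by simp
    have c0: "0 \<le> c" unfolding c_def using Qk by simp
    have fl: "f n \<ge> c * (1 - x) ^ n" using lower'[OF tt] unfolding c_def x_def b_def e_def .
    have "(1 - x) ^ n \<ge> exp (- (x / (1 - x))) ^ n"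
      using exp_bound[OF x0] x1 by (intro power_mono) auto
    also have "exp (- (x / (1 - x))) ^ n = exp (real n * (- (x / (1 - x))))" by (rule exp_of_nat_mult[symmetric])
    finally have "f n \<ge> c * exp (real n * (- (x / (1 - x))))" using fl c0
      by (meson mult_left_mono order_trans)
    then have "f n * exp L \<ge> c * exp (real n * (- (x / (1 - x)))) * exp L"
      by (intro mult_right_mono) auto
    also have "c * exp (real n * (- (x / (1 - x)))) * exp L = c * exp (- L * (b / (1 - x) - 1))"
    proof -
      have "real n * (- (x / (1 - x))) + L = - L * (b / (1 - x) - 1)"
        unfolding hL x_def by (simp add: algebra_simps)
      then show ?thesis by (simp add: exp_add[symmetric] mult.assoc)
    qed
    finally have f1: "f n * exp L \<ge> c * exp (- L * (b / (1 - x) - 1))" .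
    have s0: "0 \<le> b / (1 - x) - 1" using b12 x0 x1 by (simp add: le_divide_eq)
    have "- C * (b / (1 - x) - 1) \<le> - L * (b / (1 - x) - 1)" using LC s0 by (intro mult_right_mono) auto
    then have "c * exp (- C * (b / (1 - x) - 1)) \<le> c * exp (- L * (b / (1 - x) - 1))"
      using c0 by (intro mult_left_mono) auto
    moreover have "sk Q k = b / (1 - x) - 1" unfolding sk_def b_def x_def e_def ..
    ultimately show "(1 - 1 / Q ^ k) * exp (- C * sk Q k) \<le> f n * exp L" using f1 unfolding c_def by simp
  qed
qed

theorem theorem1:
  fixes q :: nat and z :: int
  assumes "q \<ge> 2"
  shows "(\<lambda>n. real (a_q q n (\<lceil>log (real q) (real n)\<rceil> + z)) /
           (real q ^ n * exp (- (real q - 1) *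
              real q powr ((log (real q) (real n) - real_of_int \<lceil>log (real q) (real n)\<rceil>)
                           - real_of_int z - 1))))
         \<longlonglongrightarrow> 1"
proof -
  have q: "2 \<le> q" using assms .
  have Q2: "real q \<ge> 2" using q by simp
  define kk where "kk n = nat (\<lceil>log (real q) (real n)\<rceil> + z)" for n :: nat
  define C where "C = (real q - 1) * real q powr (- real_of_int z - 1)"
  have top: "filterlim kk at_top sequentially"
    unfolding filterlim_at_top
  proof (intro allI)
    fix Zc :: nat
    define N where "N = nat \<lceil>real q powr (real Zc + real_of_int \<bar>z\<bar>)\<rceil> + 1"
    show "eventually (\<lambda>n. Zc \<le> kk n) sequentially"
      unfolding eventually_sequentially
    proof (intro exI allI impI)
      fix n assume nN: "N \<le> n"
      have "real q powr (real Zc + real_of_int \<bar>z\<bar>) \<le> real N"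
        unfolding N_def by linarith
      also have "\<dots> \<le> real n" using nN by simp
      finally have n1: "real q powr (real Zc + real_of_int \<bar>z\<bar>) \<le> real n" .
      have np: "real n > 0" using nN unfolding N_def by simp
      have "real Zc + real_of_int \<bar>z\<bar> \<le> log (real q) (real n)"
        using le_log_iff[of "real q" "real n"] q np n1 by simp
      also have "\<dots> \<le> real_of_int \<lceil>log (real q) (real n)\<rceil>" by simp
      finally have "int Zc + \<bar>z\<bar> \<le> \<lceil>log (real q) (real n)\<rceil>" by linarith
      then have "int Zc \<le> \<lceil>log (real q) (real n)\<rceil> + z" by linarith
      then show "Zc \<le> kk n" unfolding kk_def by linarith
    qed
  qed
  have e1: "eventually (\<lambda>n. 1 \<le> n) sequentially" by simp
  have e2: "eventually (\<lambda>n. 1 \<le> kk n) sequentially" using top unfolding filterlim_at_top by blast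
  have e3': "eventually (\<lambda>k. tk (real q) k < 1/4) sequentially"
    by (rule order_tendstoD(2)[OF lims(1)[OF Q2]]) simp
  have e3: "eventually (\<lambda>n. tk (real q) (kk n) < 1/4) sequentially"
    using top e3' unfolding filterlim_iff by blast
  have ev: "eventually (\<lambda>n. 1 \<le> n \<and> 1 \<le> \<lceil>log (real q) (real n)\<rceil> + z \<and> tk (real q) (kk n) \<le> 1/4) sequentially"
    using e1 e2 e3 by eventually_elim (auto simp: kk_def)
  show ?thesis
  proof (rule tendsto_sandwich[where f = "\<lambda>n. lo (real q) C (kk n)" and h = "\<lambda>n. hi (real q) (kk n)"])
    show "eventually (\<lambda>n. lo (real q) C (kk n) \<le> real (a_q q n (\<lceil>log (real q) (real n)\<rceil> + z)) /
           (real q ^ n * exp (- (real q - 1) *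
              real q powr ((log (real q) (real n) - real_of_int \<lceil>log (real q) (real n)\<rceil>)
                           - real_of_int z - 1)))) sequentially"
      using ev by eventually_elim (use point(1)[OF q] in \<open>auto simp: kk_def C_def\<close>)
    show "eventually (\<lambda>n. real (a_q q n (\<lceil>log (real q) (real n)\<rceil> + z)) /
           (real q ^ n * exp (- (real q - 1) *
              real q powr ((log (real q) (real n) - real_of_int \<lceil>log (real q) (real n)\<rceil>)
                           - real_of_int z - 1))) \<le> hi (real q) (kk n)) sequentially"
      using ev by eventually_elim (use point(2)[OF q] in \<open>auto simp: kk_def\<close>)
    show "(\<lambda>n. lo (real q) C (kk n)) \<longlonglongrightarrow> 1"
      using filterlim_compose[OF lims(2)[OF Q2] top] .
    show "(\<lambda>n. hi (real q) (kk n)) \<longlonglongrightarrow> 1"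
      using filterlim_compose[OF lims(3)[OF Q2] top] .
  qed
qed

end
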